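(* For any odd prime $p$ and any positive integer $r$, $$p^{3r}\sum_{k=0}^{(p^r-3)/2}\frac{16^k}{(2k+1)^3\binom{2k}{k}^2}\equiv p^{3}\sum_{k=0}^{(p-3)/2}\frac{16^k}{(2k+1)^3\binom{2k}{k}^2}\pmod{p^4}.$$
   Context: A congruence $a\equiv b\pmod{p^m}$ between rational numbers means that $(a-b)/p^m$ is a rational number whose denominator is not divisible by $p$. *)

theory Defs
  imports Complex_Main "HOL-Computational_Algebra.Primes"
begin

definition rat_cong :: "rat \<Rightarrow> rat \<Rightarrow> int \<Rightarrow> nat \<Rightarrow> bool" where
  "rat_cong a b p m \<longleftrightarrow> \<not> p dvd snd (quotient_of ((a - b) / of_int p ^ m))"

definition S :: "nat \<Rightarrow> rat" where
  "S n = (\<Sum>k = 0..n. 16 ^ k / (of_nat (2*k+1) ^ 3 * of_nat ((2*k) choose k) ^ 2))"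

end

theory Submission
  imports Defs "HOL-Number_Theory.Cong"
begin



locale oddp = fixes p :: nat assumes pp: "prime p" and op: "odd p"
begin

definition loc :: "rat \<Rightarrow> bool" where
  "loc x \<longleftrightarrow> (\<exists>a b::int. b \<noteq> 0 \<and> \<not> int p dvd b \<and> x = of_int a / of_int b)"

lemma p3: "p \<ge> 3"
proof -
  have "p \<ge> 2" using pp prime_ge_2_nat by blast
  moreover have "p \<noteq> 2" using op by auto
  ultimately show ?thesis by linarith
qed

lemma ppi: "prime (int p)" using pp by simp

lemma loc_int[simp]: "loc (of_int a)"
  unfolding loc_def by (rule exI[of _ a], rule exI[of _ 1]) (use p3 in auto)

lemma loc_nat[simp]: "loc (of_nat a)"
  using loc_int[of "int a"] by simp

lemma loc_0[simp]: "loc 0" using loc_int[of 0] by simp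
lemma loc_1[simp]: "loc 1" using loc_int[of 1] by simp

lemma loc_mult[intro]: "loc x \<Longrightarrow> loc y \<Longrightarrow> loc (x * y)"
proof -
  assume "loc x" "loc y"
  then obtain a b c d where "b \<noteq> 0" "\<not> int p dvd b" "x = of_int a / of_int b"
    "d \<noteq> 0" "\<not> int p dvd d" "y = of_int c / of_int d" unfolding loc_def by blast
  moreover have "\<not> int p dvd b * d" using calculation ppi by (simp add: prime_dvd_mult_iff)
  ultimately show ?thesis unfolding loc_def
    by (intro exI[of _ "a*c"] exI[of _ "b*d"]) simp
qed

lemma loc_add[intro]: "loc x \<Longrightarrow> loc y \<Longrightarrow> loc (x + y)"
proof -
  assume "loc x" "loc y"
  then obtain a b c d where "b \<noteq> 0" "\<not> int p dvd b" "x = of_int a / of_int b"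
    "d \<noteq> 0" "\<not> int p dvd d" "y = of_int c / of_int d" unfolding loc_def by blast
  moreover have "\<not> int p dvd b * d" using calculation ppi by (simp add: prime_dvd_mult_iff)
  ultimately show ?thesis unfolding loc_def
    by (intro exI[of _ "a*d + c*b"] exI[of _ "b*d"]) (simp add: field_simps)
qed

lemma loc_uminus[intro]: "loc x \<Longrightarrow> loc (- x)"
  using loc_mult[of "-1" x] loc_int[of "-1"] by simp

lemma loc_diff[intro]: "loc x \<Longrightarrow> loc y \<Longrightarrow> loc (x - y)"
  using loc_add[of x "-y"] loc_uminus by simp

lemma loc_pow[intro]: "loc x \<Longrightarrow> loc (x ^ n)"
  by (induction n) auto

lemma loc_div_int: "loc x \<Longrightarrow> \<not> int p dvd b \<Longrightarrow> loc (x / of_int b)"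
proof -
  assume "loc x" "\<not> int p dvd b"
  then obtain a c where "c \<noteq> 0" "\<not> int p dvd c" "x = of_int a / of_int c" unfolding loc_def by blast
  moreover have "b \<noteq> 0" using \<open>\<not> int p dvd b\<close> by auto
  moreover have "\<not> int p dvd c * b" using calculation \<open>\<not> int p dvd b\<close> ppi by (simp add: prime_dvd_mult_iff)
  ultimately show ?thesis unfolding loc_def
    by (intro exI[of _ "a"] exI[of _ "c*b"]) simp
qed

lemma loc_div_nat: "loc x \<Longrightarrow> \<not> p dvd b \<Longrightarrow> loc (x / of_nat b)"
  using loc_div_int[of x "int b"] by simp

lemma loc_sum[intro]: "(\<And>i. i \<in> A \<Longrightarrow> loc (f i)) \<Longrightarrow> loc (sum f A)"
  by (induction A rule: infinite_finite_induct) auto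

lemma loc_ratcong: assumes "loc ((x - y) / of_nat p ^ m)" shows "rat_cong x y (int p) m"
proof -
  obtain a b where ab: "b \<noteq> 0" "\<not> int p dvd b" "(x - y) / of_nat p ^ m = of_int a / of_int b"
    using assms unfolding loc_def by blast
  define z where "z = (x - y) / of_nat p ^ m"
  obtain n d where nd: "quotient_of z = (n, d)" by (cases "quotient_of z")
  have d0: "d > 0" using nd quotient_of_denom_pos by blast
  have cop: "coprime n d" using nd quotient_of_coprime by blast
  have zq: "z = of_int n / of_int d" using nd quotient_of_div by blast
  have "of_int n / of_int d = (of_int a / of_int b :: rat)" using zq ab(3) z_def by simp
  hence "of_int (n * b) = (of_int (a * d) :: rat)" using d0 ab(1) by (simp add: field_simps)
  hence e: "n * b = a * d" by linarith
  hence "d dvd n * b" by simp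
  hence "d dvd b" using cop by (metis coprime_commute coprime_dvd_mult_right_iff)
  hence "\<not> int p dvd d" using ab(2) dvd_trans by blast
  thus ?thesis unfolding rat_cong_def using nd z_def by simp
qed

end



lemma central_rec: "(k+1) * ((2*k+2) choose (k+1)) = 2*(2*k+1) * ((2*k) choose k)"
proof -
  define C0 where "C0 = (2*k) choose k"
  define C1 where "C1 = (2*k+1) choose k"
  define C2 where "C2 = (2*k+2) choose (k+1)"
  have a: "(2*k+2) * C1 = C2 * (k+1)"
    using Suc_times_binomial_eq[of "2*k+1" k] unfolding C1_def C2_def by simp
  have b: "(k+1) * C1 = (2*k+1) * C0"
    using binomial_absorb_comp[of "2*k+1" k] unfolding C1_def C0_def by (simp add: Suc_diff_le)
  have "C2 * (k+1) = 2 * ((k+1) * C1)" using a by simp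
  also have "\<dots> = 2 * (2*k+1) * C0" using b by simp
  finally show ?thesis unfolding C2_def C0_def by (simp add: mult.commute)
qed

definition A :: "nat \<Rightarrow> rat" where
  "A k = (\<Prod>i=1..k. of_nat (2*i) / of_nat (2*i+1))"

lemma A_0[simp]: "A 0 = 1" by (simp add: A_def)
lemma A_Suc: "A (Suc k) = A k * of_nat (2*k+2) / of_nat (2*k+3)"
  by (simp add: A_def prod.nat_ivl_Suc')

lemma aux1: "y \<noteq> 0 \<Longrightarrow> (x::rat) * z / y * y * w = x * z * w" by simp

lemma A_closed: "A k * of_nat (2*k+1) * of_nat ((2*k) choose k) = 4 ^ k"
proof (induction k)
  case 0 then show ?case by simp
next
  case (Suc k)
  define C0 where "C0 = (2*k) choose k"
  define C2 where "C2 = (2*k+2) choose (k+1)"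
  have c: "of_nat ((k+1) * C2) = (of_nat (2*(2*k+1) * C0) :: rat)"
    using central_rec[of k] unfolding C0_def C2_def by presburger
  have c2: "(of_nat C2 :: rat) = 2*(2*of_nat k+1) * of_nat C0 / of_nat (k+1)"
    using c unfolding of_nat_mult by (simp add: field_simps)
  have e: "(2 * Suc k) choose Suc k = C2" unfolding C2_def by simp
  have e2: "2 * Suc k + 1 = 2*k+3" by simp
  have "A (Suc k) * of_nat (2 * Suc k + 1) * of_nat ((2 * Suc k) choose Suc k)
     = A k * of_nat (2*k+2) / of_nat (2*k+3) * of_nat (2*k+3) * (2*(2*of_nat k+1) * of_nat C0 / of_nat (k+1))"
    unfolding e c2 e2 A_Suc by simp
  also have "\<dots> = A k * of_nat (2*k+2) * (2*(2*of_nat k+1) * of_nat C0 / of_nat (k+1))"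
    by (rule aux1) (metis of_nat_eq_0_iff add_is_0 zero_neq_numeral)
  also have "\<dots> = 4 * (A k * of_nat (2*k+1) * of_nat C0)"
    by (simp add: field_simps)
  finally show ?case using Suc unfolding C0_def by simp
qed

definition T :: "nat \<Rightarrow> rat" where "T k = A k ^ 2 / of_nat (2*k+1)"

lemma aux2: "(n::rat) \<noteq> 0 \<Longrightarrow> c \<noteq> 0 \<Longrightarrow> (x^2) / (n^3 * c^2) = (x/(n*c))^2/n"
  by (simp add: power2_eq_square power3_eq_cube field_simps)

lemma term_T: "16 ^ k / (of_nat (2*k+1) ^ 3 * of_nat ((2*k) choose k) ^ 2) = T k"
proof -
  define C where "C = (2*k) choose k"
  have ck: "C > 0" unfolding C_def by simp
  have "A k * (of_nat (2*k+1) * of_nat C) = 4 ^ k"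
    using A_closed[of k] unfolding C_def by (simp only: mult.assoc)
  hence Ak: "A k = 4 ^ k / (of_nat (2*k+1) * of_nat C)"
    using ck by (simp add: eq_divide_eq)
  have "(4::rat)^(2*k) = (4^2)^k" by (rule power_mult)
  hence "(16::rat) ^ k = (4 ^ k) ^ 2" by (simp add: power_mult[symmetric] mult.commute)
  hence "16 ^ k / (of_nat (2*k+1) ^ 3 * of_nat C ^ 2) = T k"
    unfolding T_def Ak using aux2[of "of_nat (2*k+1)" "of_nat C" "4^k"] ck
    by (simp only: of_nat_eq_0_iff)
  thus ?thesis unfolding C_def .
qed

lemma S_T: "S n = (\<Sum>k=0..n. T k)"
  unfolding S_def using term_T by simp




context oddp begin

definition Nn :: "nat \<Rightarrow> int" where
  "Nn k = (\<Prod>i\<in>{i\<in>{1..k}. \<not> p dvd i}. 2 * int i)"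
definition Dd :: "nat \<Rightarrow> int" where
  "Dd k = (\<Prod>i\<in>{i\<in>{1..k}. \<not> p dvd (2*i+1)}. 2 * int i + 1)"

lemma filt_Suc: "{i\<in>{1..Suc k}. P i} = (if P (Suc k) then insert (Suc k) {i\<in>{1..k}. P i} else {i\<in>{1..k}. P i})"
  by (auto simp: le_Suc_eq)

lemma Nn_0[simp]: "Nn 0 = 1" by (simp add: Nn_def)
lemma Dd_0[simp]: "Dd 0 = 1" by (simp add: Dd_def)

lemma Nn_Suc: "Nn (Suc k) = (if p dvd Suc k then Nn k else Nn k * (2 * int (Suc k)))"
  unfolding Nn_def filt_Suc[where P="\<lambda>i. \<not> p dvd i"] by (simp add: mult.commute)

lemma Dd_Suc: "Dd (Suc k) = (if p dvd (2 * Suc k + 1) then Dd k else Dd k * (2 * int (Suc k) + 1))"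
  unfolding Dd_def filt_Suc[where P="\<lambda>i. \<not> p dvd (2*i+1)"] by (simp add: mult.commute)

lemma Nn_pos: "Nn k > 0" unfolding Nn_def by (rule prod_pos) auto
lemma Dd_pos: "Dd k > 0" unfolding Dd_def by (rule prod_pos) auto

lemma Nn_ndvd: "\<not> int p dvd Nn k"
proof
  assume "int p dvd Nn k"
  then obtain i where i: "i \<in> {i\<in>{1..k}. \<not> p dvd i}" "int p dvd 2 * int i"
    using prime_dvd_prod_iff[OF _ ppi, of "{i\<in>{1..k}. \<not> p dvd i}" "\<lambda>i. 2 * int i"]
    unfolding Nn_def by auto
  hence "int p dvd 2 \<or> int p dvd int i" using prime_dvd_mult_iff[OF ppi] by metis
  moreover have "\<not> int p dvd 2" using p3 zdvd_imp_le[of "int p" 2] by linarith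
  ultimately show False using i by simp
qed

lemma Dd_ndvd: "\<not> int p dvd Dd k"
proof
  assume "int p dvd Dd k"
  then obtain i where i: "i \<in> {i\<in>{1..k}. \<not> p dvd (2*i+1)}" "int p dvd 2 * int i + 1"
    using prime_dvd_prod_iff[OF _ ppi, of "{i\<in>{1..k}. \<not> p dvd (2*i+1)}" "\<lambda>i. 2 * int i + 1"]
    unfolding Dd_def by auto
  hence "int p dvd int (2*i+1)" by (simp add: add.commute)
  hence "p dvd 2*i+1" by (simp only: int_dvd_int_iff)
  thus False using i by simp
qed

definition U :: "nat \<Rightarrow> rat" where "U k = of_int (Nn k) / of_int (Dd k)"

lemma loc_U: "loc (U k)" unfolding U_def using Dd_ndvd by (intro loc_div_int) auto

definition w :: "nat \<Rightarrow> rat" where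
  "w k = (if p \<le> 2*(k mod p)+1 then 1 / of_nat p else of_nat (2*(k div p)+1))"

end


context oddp begin

lemma aux3: "d\<noteq>0 \<Longrightarrow> P\<noteq>0 \<Longrightarrow> Q\<noteq>0 \<Longrightarrow> (a::rat) * (n/d) * Q * y / (P*Q) = a * (n*y/d) * (1/P)"
  by (simp add: field_simps)

lemma decomp: "A k = A (k div p) * U k * w k"
proof (induction k)
  case 0
  then show ?case using p3 by (simp add: U_def w_def)
next
  case (Suc k)
  define q where "q = k div p"
  define s where "s = k mod p"
  have k: "k = p*q + s" unfolding q_def s_def by simp
  have sp: "s < p" unfolding s_def using p3 by simp
  have Dne: "(of_int (Dd k) :: rat) \<noteq> 0" using Dd_pos[of k] by simp
  have IH: "A k = A q * (of_int (Nn k) / of_int (Dd k)) * w k"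
    using Suc unfolding q_def U_def .
  have pne: "(of_nat p :: rat) \<noteq> 0" using p3 by simp
  show ?case
  proof (cases "Suc s = p")
    case True
    have sk: "Suc k = p * (q+1)" using k True by simp
    have d1: "Suc k div p = q + 1" using sk p3 by simp
    have m1: "Suc k mod p = 0" using sk by simp
    have nd: "\<not> p dvd (2 * Suc k + 1)"
    proof
      assume "p dvd 2 * Suc k + 1"
      moreover have "p dvd 2 * Suc k" using sk by simp
      ultimately have "p dvd 1" using dvd_add_right_iff by blast
      thus False using p3 by simp
    qed
    have wk: "w k = 1 / of_nat p" unfolding w_def s_def[symmetric] using True by simp
    have wk1: "w (Suc k) = of_nat (2*(q+1)+1)" unfolding w_def using m1 d1 p3 by simp
    have NS: "Nn (Suc k) = Nn k" using Nn_Suc[of k] sk by simp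
    have DS: "Dd (Suc k) = Dd k * (2 * int (Suc k) + 1)" using Dd_Suc[of k] nd by simp
    have e: "(of_nat (2*k+2) :: rat) = of_nat p * of_nat (2*q+2)"
      using arg_cong[OF sk, of "\<lambda>x. (of_nat (2*x) :: rat)"] by (simp add: algebra_simps)
    have "A (Suc k) = A q * (of_int (Nn k) / of_int (Dd k)) * (1 / of_nat p) * of_nat (2*k+2) / of_nat (2*k+3)"
      using A_Suc[of k] IH wk by simp
    also have "\<dots> = A q * of_nat (2*q+2) / of_nat (2*q+3) * (of_int (Nn k) / (of_int (Dd k) * of_nat (2*k+3))) * of_nat (2*(q+1)+1)"
    proof -
      have n1: "(of_nat (2*k+3) :: rat) \<noteq> 0" by (metis of_nat_eq_0_iff add_is_0 zero_neq_numeral)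
      have n2: "(of_nat (2*q+3) :: rat) \<noteq> 0" by (metis of_nat_eq_0_iff add_is_0 zero_neq_numeral)
      have e3: "(of_nat (2*(q+1)+1) :: rat) = of_nat (2*q+3)" by simp
      show ?thesis unfolding e e3 using Dne pne n1 n2 by (simp del: of_nat_add of_nat_mult add: field_simps)
    qed
    also have "\<dots> = A (q+1) * (of_int (Nn k) / (of_int (Dd k) * of_nat (2*k+3))) * of_nat (2*(q+1)+1)"
      using A_Suc[of q] by simp
    finally show ?thesis unfolding U_def d1 wk1 NS DS by (simp add: algebra_simps)
  next
    case False
    hence ss: "Suc s < p" using sp by simp
    have sk: "Suc k = p * q + Suc s" using k by simp
    have sk': "Suc k = Suc s + q * p" using sk by simp
    have "(Suc s + q*p) div p = q + Suc s div p" by (rule div_mult_self1) (use p3 in simp)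
    moreover have "Suc s div p = 0" using ss by simp
    ultimately have d1: "Suc k div p = q" using sk' by simp
    have "(Suc s + q*p) mod p = Suc s mod p" by (rule mod_mult_self1)
    hence m1: "Suc k mod p = Suc s" using sk' ss by simp
    have ndv: "\<not> p dvd Suc k"
    proof
      assume "p dvd Suc k"
      hence "Suc k mod p = 0" by simp
      thus False using m1 by simp
    qed
    have NS: "Nn (Suc k) = Nn k * (2 * int (Suc k))" using Nn_Suc[of k] ndv by simp
    show ?thesis
    proof (cases "p dvd (2 * Suc k + 1)")
      case True
      have "2 * Suc k + 1 = p * (2*q) + (2*s+3)" using k by simp
      hence "p dvd 2*s+3" using True by (metis dvd_add_right_iff dvd_mult2 dvd_refl)
      moreover have "2*s+3 < 2*p" using ss by simp
      moreover have "2*s+3 > 0" by simp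
      ultimately have s3: "2*s+3 = p"
        by (metis dvd_imp_le less_2_cases_iff mult_eq_0_iff nat_less_le not_less_zero dvd_div_mult_self div_less_iff_less_mult less_numeral_extra(3) mult.commute zero_less_iff_neq_zero dvd_mult_div_cancel One_nat_def mult_1 nat_mult_less_cancel_disj)
      have wk: "w k = of_nat (2*q+1)" unfolding w_def s_def[symmetric] q_def[symmetric] using s3 by simp
      have wk1: "w (Suc k) = 1 / of_nat p" unfolding w_def using m1 s3 by simp
      have DS: "Dd (Suc k) = Dd k" using Dd_Suc[of k] True by simp
      have e: "(of_nat (2*k+3) :: rat) = of_nat p * of_nat (2*q+1)"
      proof -
        have "2*k+3 = p*(2*q+1)" using k s3 by (simp add: algebra_simps)
        thus ?thesis by (metis of_nat_mult)
      qed
      have "A (Suc k) = A q * (of_int (Nn k) / of_int (Dd k)) * of_nat (2*q+1) * of_nat (2*k+2) / of_nat (2*k+3)"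
        using A_Suc[of k] IH wk by simp
      also have "\<dots> = A q * (of_int (Nn k) * of_nat (2*k+2) / of_int (Dd k)) * (1 / of_nat p)"
      proof -
        have n2: "(of_nat (2*q+1) :: rat) \<noteq> 0" by (metis of_nat_eq_0_iff add_is_0 one_neq_zero)
        show ?thesis unfolding e by (rule aux3[OF Dne pne n2])
      qed
      finally show ?thesis unfolding U_def d1 wk1 NS DS by (simp add: algebra_simps)
    next
      case False
      have DS: "Dd (Suc k) = Dd k * (2 * int (Suc k) + 1)" using Dd_Suc[of k] False by simp
      have "2 * Suc k + 1 = p * (2*q) + (2*s+3)" using k by simp
      hence "2*s+3 \<noteq> p" using False by (metis dvd_add dvd_mult2 dvd_refl)
      hence "(p \<le> 2*s+1) = (p \<le> 2*Suc s+1)" using op by presburger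
      hence wk: "w (Suc k) = w k" unfolding w_def m1 d1 s_def[symmetric] q_def[symmetric] by simp
      have "A (Suc k) = A q * (of_int (Nn k) / of_int (Dd k)) * w k * of_nat (2*k+2) / of_nat (2*k+3)"
        using A_Suc[of k] IH by simp
      also have "\<dots> = A q * (of_int (Nn k * (2 * int (Suc k))) / of_int (Dd k * (2 * int (Suc k) + 1))) * w k"
        using Dne by (simp add: field_simps)
      finally show ?thesis unfolding U_def d1 wk NS DS .
    qed
  qed
qed

end


context oddp begin

lemma pow_split: "1 \<le> r \<Longrightarrow> (p::nat) ^ r = p * p ^ (r - 1)"
  by (metis Suc_diff_le diff_Suc_1 power_Suc)

lemma F1: "1 \<le> r \<Longrightarrow> 2*k+1 < p^r \<Longrightarrow> loc (of_nat p ^ (r-1) * A k)"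
proof (induction k arbitrary: r rule: less_induct)
  case (less k)
  show ?case
  proof (cases "k = 0")
    case True
    then show ?thesis by auto
  next
    case False
    define q where "q = k div p"
    define s where "s = k mod p"
    have k: "k = p*q + s" unfolding q_def s_def by simp
    have qk: "q < k" unfolding q_def using False p3 by simp
    have dec: "A k = A q * U k * w k" using decomp[of k] unfolding q_def .
    show ?thesis
    proof (cases "p \<le> 2*s+1")
      case True
      have wk: "w k = 1 / of_nat p" unfolding w_def s_def[symmetric] using True by simp
      have "p*(2*q+1) \<le> 2*k+1" using k True by (simp add: algebra_simps)
      also have "\<dots> < p * p^(r-1)" using less.prems pow_split by simp
      finally have "p*(2*q+1) < p * p^(r-1)" .
      hence qr: "2*q+1 < p^(r-1)" by (metis mult_less_cancel1)
      hence r2: "1 \<le> r - 1" by (metis Suc_leI gr0I less_one not_add_less2 power_0 add_gr_0 zero_less_one Nat.add_0_right nat_less_le le_add2 diff_is_0_eq' not_less power_eq_0_iff)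
      have IH: "loc (of_nat p ^ (r-1-1) * A q)" using less.IH[OF qk r2 qr] .
      have e: "(of_nat p :: rat) ^ (r-1) = of_nat p ^ (r-1-1) * of_nat p"
        using r2 by (metis Suc_diff_le diff_Suc_1 power_Suc2)
      have "of_nat p ^ (r-1) * A k = (of_nat p ^ (r-1-1) * A q) * U k"
        unfolding dec wk e using p3 by (simp add: field_simps)
      thus ?thesis using IH loc_U by auto
    next
      case False
      have wk: "w k = of_nat (2*q+1)" unfolding w_def s_def[symmetric] q_def[symmetric] using False by simp
      have qr: "2*q+1 < p^r" using qk less.prems by simp
      have IH: "loc (of_nat p ^ (r-1) * A q)" using less.IH[OF qk less.prems(1) qr] .
      have "of_nat p ^ (r-1) * A k = (of_nat p ^ (r-1) * A q) * U k * of_nat (2*q+1)"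
        unfolding dec wk by (simp add: field_simps)
      thus ?thesis using IH loc_U by (metis loc_mult loc_nat)
    qed
  qed
qed

end


context oddp begin

lemma pair_cong:
  assumes k: "k = p*l + (p - 1) div 2"
  shows "int p dvd (Nn k ^ 2 - Dd k ^ 2)"
proof -
  define m where "m = (p - 1) div 2"
  have m1: "1 \<le> m" "2*m+1 = p" unfolding m_def using p3 op by (auto elim: oddE)
  have kk: "2*k+1 = p*(2*l+1)" using k m1 unfolding m_def[symmetric] by (simp add: algebra_simps)
  have k1: "k \<ge> 1" using k m1 unfolding m_def[symmetric] by simp
  have ndk: "\<not> p dvd k"
  proof
    assume "p dvd k"
    hence "p dvd 2*k" by simp
    moreover have "p dvd 2*k+1" using kk by simp
    ultimately have "p dvd 1" using dvd_add_right_iff by blast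
    thus False using p3 by simp
  qed
  define K where "K = k - 1"
  have kK: "k = Suc K" using k1 unfolding K_def by simp
  define F where "F = {i\<in>{1..K}. \<not> p dvd i}"
  define G where "G = {i\<in>{1..K}. \<not> p dvd (2*i+1)}"
  define E where "E = (\<Prod>i\<in>F. 2 * int i)"
  have NK: "Nn k = E * (2 * int k)" using Nn_Suc[of K] ndk unfolding kK E_def F_def Nn_def by simp
  have DK: "Dd k = (\<Prod>i\<in>G. 2 * int i + 1)" using Dd_Suc[of K] kk unfolding kK G_def Dd_def by simp
  have img: "G = (\<lambda>i. k - i) ` F"
  proof (rule set_eqI, rule iffI)
    fix x assume x: "x \<in> G"
    hence x1: "1 \<le> x" "x \<le> K" "\<not> p dvd 2*x+1" unfolding G_def by auto
    have "2*(k-x) + (2*x+1) = 2*k+1" using x1 kK by simp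
    hence "\<not> p dvd (k - x)"
      using x1(3) kk by (metis dvd_add_right_iff dvd_mult dvd_mult2 dvd_triv_left)
    moreover have "k - (k - x) = x" "1 \<le> k - x" "k - x \<le> K" using x1 kK by auto
    ultimately show "x \<in> (\<lambda>i. k - i) ` F" unfolding F_def by (intro image_eqI[of _ _ "k - x"]) auto
  next
    fix x assume "x \<in> (\<lambda>i. k - i) ` F"
    then obtain i where i: "i \<in> F" "x = k - i" by blast
    hence i1: "1 \<le> i" "i \<le> K" "\<not> p dvd i" unfolding F_def by auto
    have "2*i + (2*x+1) = 2*k+1" using i i1 kK by simp
    have "\<not> p dvd 2*x+1"
    proof
      assume "p dvd 2*x+1"
      moreover have "p dvd 2*i + (2*x+1)" using \<open>2*i + (2*x+1) = 2*k+1\<close> kk by simp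
      ultimately have "p dvd 2*i" using dvd_add_left_iff by blast
      hence "p dvd 2 \<or> p dvd i" using prime_dvd_mult_iff[OF pp] by blast
      moreover have "\<not> p dvd 2" using p3 by (auto dest: dvd_imp_le)
      ultimately show False using i1(3) by blast
    qed
    thus "x \<in> G" using i i1 kK unfolding G_def by auto
  qed
  have inj: "inj_on (\<lambda>i. k - i) F" unfolding F_def inj_on_def using kK by auto
  have DK2: "Dd k = (\<Prod>i\<in>F. 2 * int (k - i) + 1)"
    unfolding DK img using prod.reindex[OF inj, of "\<lambda>x. 2 * int x + 1"] by simp
  have cg: "[Dd k = (\<Prod>i\<in>F. - (2 * int i))] (mod int p)"
    unfolding DK2
  proof (rule cong_prod)
    fix i assume "i \<in> F"
    hence ik: "i \<le> k" unfolding F_def using kK by auto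
    have "2 * int (k - i) + 1 - (- (2 * int i)) = int (2*k+1)" using ik by simp
    also have "\<dots> = int p * int (2*l+1)" unfolding kk by (simp add: algebra_simps)
    finally show "[2 * int (k - i) + 1 = - (2 * int i)] (mod int p)"
      unfolding cong_iff_dvd_diff by simp
  qed
  hence cD: "[Dd k = (-1) ^ card F * E] (mod int p)" unfolding E_def prod_uminus .
  hence cD2: "[Dd k ^ 2 = E ^ 2] (mod int p)"
    using cong_pow[OF cD, of 2] by (simp add: power_mult_distrib flip: power_mult)
  have "[2 * int k = -1] (mod int p)"
  proof -
    have "2 * int k - (-1) = int (2*k+1)" by simp
    also have "\<dots> = int p * int (2*l+1)" unfolding kk by (simp add: algebra_simps)
    finally show ?thesis unfolding cong_iff_dvd_diff by simp
  qed
  hence "[Nn k = E * (-1)] (mod int p)" unfolding NK by (rule cong_scalar_left)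
  hence cN2: "[Nn k ^ 2 = E ^ 2] (mod int p)" using cong_pow[of "Nn k" "E * (-1)" "int p" 2] by simp
  have "[Nn k ^ 2 = Dd k ^ 2] (mod int p)" using cN2 cD2 by (meson cong_sym cong_trans)
  thus ?thesis unfolding cong_iff_dvd_diff .
qed

end


context oddp begin

abbreviation PP :: rat where "PP \<equiv> of_nat p"

lemma PP_ne: "PP \<noteq> 0" using p3 by simp

lemma pfac: "0 < n \<Longrightarrow> \<exists>e u. n = p^e*u \<and> \<not> p dvd u"
proof (induction n rule: less_induct)
  case (less n)
  show ?case
  proof (cases "p dvd n")
    case True
    then obtain n' where n': "n = p * n'" by blast
    hence "0 < n'" "n' < n" using less.prems p3 by auto
    then obtain e u where "n' = p^e*u" "\<not> p dvd u" using less.IH by blast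
    thus ?thesis using n' by (intro exI[of _ "Suc e"] exI[of _ u]) simp
  next
    case False
    thus ?thesis by (intro exI[of _ 0] exI[of _ n]) simp
  qed
qed

lemma G0: "(x::rat) \<noteq> 0 \<Longrightarrow> n \<noteq> 0 \<Longrightarrow> x^(2*a+b+4) * (y^2/n) / x^4 = (x^a*y)^2 * x^b / n"
  by (simp add: power_add power_mult field_simps power2_eq_square)
lemma G1: "(x::rat) \<noteq> 0 \<Longrightarrow> n \<noteq> 0 \<Longrightarrow> (a*u/x)^2/(x*n) = (a^2/n)*u^2/x^3"
  by (simp add: field_simps power2_eq_square power3_eq_cube)
lemma G2: "(x::rat) \<noteq> 0 \<Longrightarrow> u \<noteq> 0 \<Longrightarrow> x^(2*a+e+b+3) * (y^2/(x^e*u)) / x^3 = (x^a*y)^2*x^b/u"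
  by (simp add: power_add power_mult field_simps power2_eq_square)
lemma G3: "(x::rat) \<noteq> 0 \<Longrightarrow> (x^(c+3) * (t*v^2/x^3) - x^c*t)/x^4 = (x^c*t/x^3) * ((v^2-1)/x)"
  by (simp add: power_add field_simps eval_nat_numeral)
lemma G4: "(x::rat) \<noteq> 0 \<Longrightarrow> D \<noteq> 0 \<Longrightarrow> N^2 - D^2 = x*c \<Longrightarrow> ((N/D)^2-1)/x = c/D^2"
  by (simp add: field_simps power2_eq_square)

lemma F2: assumes "2 \<le> r" "2*k+1 < p^r" "\<not> p dvd 2*k+1"
  shows "loc (PP^(3*r) * T k / PP^4)"
proof -
  have r: "3*r = 2*(r-1) + (r-2) + 4" using assms(1) by simp
  have "PP^(3*r) * T k / PP^4 = (PP^(r-1) * A k)^2 * PP^(r-2) / of_nat (2*k+1)"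
    unfolding r T_def by (rule G0[OF PP_ne]) (metis of_nat_eq_0_iff add_is_0 one_neq_zero)
  moreover have LA: "loc (PP^(r-1) * A k)" using F1 assms by simp
  have "loc ((PP^(r-1) * A k)^2 * PP^(r-2) / of_nat (2*k+1))"
    by (rule loc_div_nat[OF loc_mult[OF loc_pow[OF LA] loc_pow[OF loc_nat]] assms(3)])
  ultimately show ?thesis by simp
qed

lemma F3: assumes r: "2 \<le> r" and l: "2*l+1 < p^(r-1)"
  shows "loc ((PP^(3*r) * T (p*l + (p-1) div 2) - PP^(3*(r-1)) * T l) / PP^4)"
proof -
  define m where "m = (p - 1) div 2"
  define k where "k = p*l + m"
  have m1: "1 \<le> m" "2*m+1 = p" unfolding m_def using p3 op by (auto elim: oddE)
  have mp: "m < p" using m1 by simp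
  have kk: "2*k+1 = p*(2*l+1)" using m1 unfolding k_def by (simp add: algebra_simps)
  have kd: "k div p = l" unfolding k_def using mp by simp
  have km: "k mod p = m" unfolding k_def using mp by simp
  have wk: "w k = 1 / PP" unfolding w_def km using m1 by simp
  have Ak: "A k = A l * U k / PP" using decomp[of k] unfolding kd wk by simp
  have Tk: "T k = T l * U k ^ 2 / PP^3"
  proof -
    have e: "of_nat (2*k+1) = PP * of_nat (2*l+1)" unfolding kk by (rule of_nat_mult)
    show ?thesis unfolding T_def Ak e
      by (rule G1[OF PP_ne]) (metis of_nat_eq_0_iff add_is_0 one_neq_zero)
  qed
  have r3: "3*r = 3*(r-1) + 3" using r by simp
  have diff: "(PP^(3*r) * T k - PP^(3*(r-1)) * T l) / PP^4
      = (PP^(3*(r-1)) * T l / PP^3) * ((U k ^ 2 - 1) / PP)"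
    unfolding Tk r3 by (rule G3[OF PP_ne])
  obtain e u where eu: "2*l+1 = p^e*u" "\<not> p dvd u" using pfac[of "2*l+1"] by auto
  have unz: "u \<noteq> 0"
  proof
    assume "u = 0" with eu(1) show False by simp
  qed
  hence "p^e \<le> 2*l+1" unfolding eu(1) by simp
  hence "p^e < p^(r-1)" using l by simp
  moreover have "1 < p" using p3 by simp
  ultimately have er: "e < r - 1" using power_less_imp_less_exp by blast
  have r6: "3*(r-1) = 2*(r-2) + e + (r-2-e) + 3" using er r by simp
  have f1: "PP^(3*(r-1)) * T l / PP^3 = (PP^(r-2) * A l)^2 * PP^(r-2-e) / of_nat u"
  proof -
    have e: "of_nat (2*l+1) = PP^e * of_nat u" unfolding eu by (simp only: of_nat_mult of_nat_power)
    have u0: "(of_nat u :: rat) \<noteq> 0" using unz by simp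
    show ?thesis unfolding T_def r6 e by (rule G2[OF PP_ne u0])
  qed
  have LA: "loc (PP^(r-2) * A l)" proof -
    have "r - 2 = r - 1 - 1" by simp
    thus ?thesis using F1[of "r-1" l] l r by simp
  qed
  have L1: "loc (PP^(3*(r-1)) * T l / PP^3)" unfolding f1
    by (rule loc_div_nat[OF loc_mult[OF loc_pow[OF LA] loc_pow[OF loc_nat]] eu(2)])
  have kdef2: "k = p*l + (p-1) div 2" by (simp add: k_def m_def)
  obtain c where c: "Nn k ^ 2 - Dd k ^ 2 = int p * c" using pair_cong[OF kdef2] by (elim dvdE) 
  have Dne: "(of_int (Dd k) :: rat) \<noteq> 0" using Dd_pos[of k] by simp
  have eqU: "(U k ^ 2 - 1) / PP = of_int c / of_int (Dd k) ^ 2"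
  proof -
    have "(of_int (Nn k) ^ 2 - of_int (Dd k) ^ 2 :: rat) = PP * of_int c"
      using arg_cong[OF c, of "of_int :: int \<Rightarrow> rat"] by simp
    thus ?thesis unfolding U_def by (rule G4[OF PP_ne Dne])
  qed
  have nd2: "\<not> int p dvd Dd k ^ 2" using Dd_ndvd[of k] prime_dvd_power[OF ppi, of "Dd k" 2] by blast
  have "loc (of_int c / of_int (Dd k ^ 2))" by (rule loc_div_int[OF loc_int nd2])
  hence L2: "loc ((U k ^ 2 - 1) / PP)" unfolding eqU by simp
  have kx: "p*l + (p-1) div 2 = k" by (simp add: k_def m_def)
  show ?thesis unfolding kx diff by (rule loc_mult[OF L1 L2])
qed

end


context oddp begin

lemma odd_bound: "odd (N::nat) \<Longrightarrow> 3 \<le> N \<Longrightarrow> (x \<le> (N-3) div 2 \<longleftrightarrow> 2*x+1 < N)"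
  by (elim oddE) presburger

lemma pr_ge: "1 \<le> r \<Longrightarrow> 3 \<le> p^r"
proof -
  assume "1 \<le> r"
  hence "p^1 \<le> p^r" using p3 by (intro power_increasing) auto
  thus ?thesis using p3 by simp
qed

lemma odd_pr: "odd (p^r)" using op by simp

lemma step:
  assumes r: "2 \<le> r"
  shows "loc ((PP^(3*r) * S ((p^r - 3) div 2) - PP^(3*(r-1)) * S ((p^(r-1) - 3) div 2)) / PP^4)"
proof -
  define I where "I = {0..(p^r - 3) div 2}"
  define J where "J = {0..(p^(r-1) - 3) div 2}"
  define m where "m = (p - 1) div 2"
  define f where "f = (\<lambda>l. p*l + m)"
  define B where "B = {k. p dvd 2*k+1}"
  have m1: "2*m+1 = p" unfolding m_def using p3 op by (auto elim: oddE)
  have pr1: "p^r = p * p^(r-1)" using r by (metis Suc_diff_le diff_Suc_1 power_Suc le_trans one_le_numeral)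
  have I_iff: "k \<in> I \<longleftrightarrow> 2*k+1 < p^r" for k
    unfolding I_def using odd_bound[OF odd_pr pr_ge, of r k] r by simp
  have J_iff: "l \<in> J \<longleftrightarrow> 2*l+1 < p^(r-1)" for l
    unfolding J_def using odd_bound[OF odd_pr pr_ge, of "r-1" l] r by simp
  have fl: "2 * f l + 1 = p * (2*l+1)" for l unfolding f_def using m1 by (simp add: algebra_simps)
  have img: "I \<inter> B = f ` J"
  proof (rule set_eqI, rule iffI)
    fix k assume k: "k \<in> I \<inter> B"
    then obtain c where c: "2*k+1 = p*c" unfolding B_def by blast
    have "odd (p*c)" using c[symmetric] by simp
    hence "odd c" by simp
    then obtain l where l: "c = 2*l+1" by (elim oddE) simp
    have "2*k+1 = 2 * f l + 1" using c l fl by simp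
    hence kf: "k = f l" by simp
    have "p*(2*l+1) < p * p^(r-1)" using k I_iff c l pr1 by simp
    hence "2*l+1 < p^(r-1)" by (metis mult_less_cancel1)
    thus "k \<in> f ` J" using kf J_iff by blast
  next
    fix k assume "k \<in> f ` J"
    then obtain l where l: "l \<in> J" "k = f l" by blast
    have "2*l+1 < p^(r-1)" using l J_iff by simp
    moreover have "0 < p" using p3 by simp
    ultimately have "p*(2*l+1) < p * p^(r-1)" by (metis mult_less_cancel1)
    hence "k \<in> I" using I_iff l fl pr1 by simp
    moreover have "k \<in> B" unfolding B_def using l fl by simp
    ultimately show "k \<in> I \<inter> B" by simp
  qed
  have inj: "inj_on f J" unfolding f_def inj_on_def using p3 by simp
  have SI: "S ((p^r - 3) div 2) = (\<Sum>l\<in>J. T (f l)) + (\<Sum>k\<in>I - B. T k)"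
  proof -
    have "S ((p^r - 3) div 2) = sum T I" unfolding S_T I_def ..
    also have "\<dots> = sum T (I \<inter> B) + sum T (I - B)" unfolding I_def by (rule sum.Int_Diff) simp
    also have "sum T (I \<inter> B) = (\<Sum>l\<in>J. T (f l))" unfolding img using sum.reindex[OF inj, of T] by simp
    finally show ?thesis .
  qed
  have SJ: "S ((p^(r-1) - 3) div 2) = (\<Sum>l\<in>J. T l)" unfolding S_T J_def ..
  have eq: "(PP^(3*r) * S ((p^r - 3) div 2) - PP^(3*(r-1)) * S ((p^(r-1) - 3) div 2)) / PP^4
     = (\<Sum>l\<in>J. (PP^(3*r) * T (f l) - PP^(3*(r-1)) * T l) / PP^4) + (\<Sum>k\<in>I - B. PP^(3*r) * T k / PP^4)"
    unfolding SI SJ by (simp add: distrib_left sum_distrib_left sum_divide_distrib sum_subtractf add_divide_distrib diff_divide_distrib)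
  have L1: "loc (\<Sum>l\<in>J. (PP^(3*r) * T (f l) - PP^(3*(r-1)) * T l) / PP^4)"
  proof (rule loc_sum)
    fix l assume "l \<in> J"
    hence "2*l+1 < p^(r-1)" using J_iff by simp
    thus "loc ((PP^(3*r) * T (f l) - PP^(3*(r-1)) * T l) / PP^4)"
      using F3[OF r] unfolding f_def m_def by simp
  qed
  have L2: "loc (\<Sum>k\<in>I - B. PP^(3*r) * T k / PP^4)"
  proof (rule loc_sum)
    fix k assume "k \<in> I - B"
    hence "2*k+1 < p^r" "\<not> p dvd 2*k+1" using I_iff unfolding B_def by auto
    thus "loc (PP^(3*r) * T k / PP^4)" using F2[OF r] by simp
  qed
  show ?thesis unfolding eq using L1 L2 by (rule loc_add)
qed

lemma main: "1 \<le> r \<Longrightarrow> loc ((PP^(3*r) * S ((p^r - 3) div 2) - PP^3 * S ((p - 3) div 2)) / PP^4)"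
proof (induction r)
  case 0 then show ?case by simp
next
  case (Suc r)
  show ?case
  proof (cases "r = 0")
    case True then show ?thesis by simp
  next
    case False
    have IH: "loc ((PP^(3*r) * S ((p^r - 3) div 2) - PP^3 * S ((p - 3) div 2)) / PP^4)"
      using Suc False by simp
    have st: "loc ((PP^(3*Suc r) * S ((p^Suc r - 3) div 2) - PP^(3*r) * S ((p^r - 3) div 2)) / PP^4)"
      using step[of "Suc r"] False by simp
    have "(PP^(3*Suc r) * S ((p^Suc r - 3) div 2) - PP^3 * S ((p - 3) div 2)) / PP^4
      = (PP^(3*Suc r) * S ((p^Suc r - 3) div 2) - PP^(3*r) * S ((p^r - 3) div 2)) / PP^4
        + (PP^(3*r) * S ((p^r - 3) div 2) - PP^3 * S ((p - 3) div 2)) / PP^4"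
      by (simp add: diff_divide_distrib)
    thus ?thesis using loc_add[OF st IH] by simp
  qed
qed

end

theorem lemma3p2:
  fixes p r :: nat
  assumes "prime p" and "odd p" and "r > 0"
  shows "rat_cong (of_nat p ^ (3*r) * S ((p ^ r - 3) div 2))
                  (of_nat p ^ 3 * S ((p - 3) div 2)) (int p) 4"
proof -
  interpret oddp p using assms by unfold_locales
  show ?thesis using loc_ratcong main assms(3) by simp
qed



end
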